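(* Let $n,m\ge 1$, let $A=(a_1,\ldots,a_m)$ be a real $n\times m$ matrix with $a_i\neq 0$ for all $i$, and let $b=(b_1,\ldots,b_m)^\top\in\mathbb{R}^m$ be such that $K=\{x\in\mathbb{R}^n \mid A^\top x\le b\}$ is nonempty. For $\varepsilon\ge 0$ put $b_i(\varepsilon)=b_i+\varepsilon^i$ (so $b_i(0)=b_i$), $H_i(\varepsilon)=\{x\mid a_i^\top x\le b_i(\varepsilon)\}$, $\partial H_i(\varepsilon)=\{x\mid a_i^\top x= b_i(\varepsilon)\}$, $K(\varepsilon)=\bigcap_{i=1}^m H_i(\varepsilon)$, $F_i(\varepsilon)=\partial H_i(\varepsilon)\cap K(\varepsilon)$, and $\mathcal{F}(\varepsilon)=\{J\subseteq\{1,\ldots,m\}\mid J\neq\emptyset,\ \bigcap_{i\in J}F_i(\varepsilon)\neq\emptyset\}$. Let $\mathcal{F}=\mathcal{F}(0)$, and let $\mathcal{F}(0+)$ denote the common value of $\mathcal{F}(\varepsilon)$ for all sufficiently small $\varepsilon>0$ (which is known to exist). Then $\mathcal{F}\supseteq\mathcal{F}(0+)$; consequently $|\mathcal{F}|\ge|\mathcal{F}(0+)|$. *)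

theory Defs
  imports "HOL-Analysis.Analysis"
begin

text \<open>Columns a_1..a_m of A are given as a function a indexed by 1..m,
vectors in R^n are real^'n. Perturbed right-hand side b_i(eps) = b_i + eps^i.\<close>

definition bpert :: "(nat \<Rightarrow> real) \<Rightarrow> real \<Rightarrow> nat \<Rightarrow> real" where
  "bpert b \<epsilon> i = b i + \<epsilon> ^ i"

definition Hsp :: "(nat \<Rightarrow> real^'n) \<Rightarrow> (nat \<Rightarrow> real) \<Rightarrow> real \<Rightarrow> nat \<Rightarrow> (real^'n) set" where
  "Hsp a b \<epsilon> i = {x. a i \<bullet> x \<le> bpert b \<epsilon> i}"

definition bdHsp :: "(nat \<Rightarrow> real^'n) \<Rightarrow> (nat \<Rightarrow> real) \<Rightarrow> real \<Rightarrow> nat \<Rightarrow> (real^'n) set" where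
  "bdHsp a b \<epsilon> i = {x. a i \<bullet> x = bpert b \<epsilon> i}"

definition Kpoly :: "nat \<Rightarrow> (nat \<Rightarrow> real^'n) \<Rightarrow> (nat \<Rightarrow> real) \<Rightarrow> real \<Rightarrow> (real^'n) set" where
  "Kpoly m a b \<epsilon> = (\<Inter>i\<in>{1..m}. Hsp a b \<epsilon> i)"

definition Face :: "nat \<Rightarrow> (nat \<Rightarrow> real^'n) \<Rightarrow> (nat \<Rightarrow> real) \<Rightarrow> real \<Rightarrow> nat \<Rightarrow> (real^'n) set" where
  "Face m a b \<epsilon> i = bdHsp a b \<epsilon> i \<inter> Kpoly m a b \<epsilon>"

definition FaceFam :: "nat \<Rightarrow> (nat \<Rightarrow> real^'n) \<Rightarrow> (nat \<Rightarrow> real) \<Rightarrow> real \<Rightarrow> nat set set" where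
  "FaceFam m a b \<epsilon> = {J. J \<subseteq> {1..m} \<and> J \<noteq> {} \<and> (\<Inter>i\<in>J. Face m a b \<epsilon> i) \<noteq> {}}"

end

theory Submission
  imports Defs
begin

lemma cone_eq:
  fixes v :: "nat \<Rightarrow> 'a::euclidean_space"
  assumes fin: "finite I" and JI: "J \<subseteq> I"
  shows "{(\<Sum>i\<in>I. e i *\<^sub>R v i) | e. \<forall>i\<in>I-J. e i \<ge> 0}
         = convex_cone hull (v ` I \<union> (\<lambda>i. - v i) ` J)" (is "?C = ?H")
proof
  show "?H \<subseteq> ?C"
  proof (rule hull_minimal)
    show "v ` I \<union> (\<lambda>i. - v i) ` J \<subseteq> ?C"
    proof
      fix w assume "w \<in> v ` I \<union> (\<lambda>i. - v i) ` J"
      then consider j where "j \<in> I" "w = v j" | j where "j \<in> J" "w = - v j" by blast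
      then show "w \<in> ?C"
      proof cases
        case 1
        have "(\<Sum>i\<in>I. (if i = j then 1 else 0) *\<^sub>R v i) = (\<Sum>i\<in>I. if i = j then v i else 0)"
          by (intro sum.cong) auto
        also have "\<dots> = v j" using 1 fin by simp
        finally have "(\<Sum>i\<in>I. (if i = j then 1 else 0) *\<^sub>R v i) = v j" .
        then show ?thesis using 1 by (intro CollectI exI[of _ "\<lambda>i. if i = j then 1 else 0"]) auto
      next
        case 2
        have "(\<Sum>i\<in>I. (if i = j then -1 else 0) *\<^sub>R v i) = (\<Sum>i\<in>I. if i = j then - v i else 0)"
          by (intro sum.cong) auto
        also have "\<dots> = - v j" using 2 fin JI by auto
        finally have "(\<Sum>i\<in>I. (if i = j then -1 else 0) *\<^sub>R v i) = - v j" .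
        then show ?thesis using 2 by (intro CollectI exI[of _ "\<lambda>i. if i = j then -1 else 0"]) auto
      qed
    qed
    show "convex_cone ?C"
      unfolding convex_cone_iff
    proof (intro conjI ballI allI impI)
      show "0 \<in> ?C" by (intro CollectI exI[of _ "\<lambda>i. 0"]) auto
    next
      fix x y assume "x \<in> ?C" "y \<in> ?C"
      then obtain e f where e: "x = (\<Sum>i\<in>I. e i *\<^sub>R v i)" "\<forall>i\<in>I-J. e i \<ge> 0"
        and f: "y = (\<Sum>i\<in>I. f i *\<^sub>R v i)" "\<forall>i\<in>I-J. f i \<ge> 0" by blast
      have "x + y = (\<Sum>i\<in>I. (e i + f i) *\<^sub>R v i)"
        by (simp add: e f scaleR_add_left sum.distrib)
      then show "x + y \<in> ?C" using e f by (intro CollectI exI[of _ "\<lambda>i. e i + f i"]) auto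
    next
      fix x and c :: real assume "x \<in> ?C" "0 \<le> c"
      then obtain e where e: "x = (\<Sum>i\<in>I. e i *\<^sub>R v i)" "\<forall>i\<in>I-J. e i \<ge> 0" by blast
      have "c *\<^sub>R x = (\<Sum>i\<in>I. (c * e i) *\<^sub>R v i)"
        by (simp add: e scaleR_sum_right)
      then show "c *\<^sub>R x \<in> ?C" using e \<open>0 \<le> c\<close> by (intro CollectI exI[of _ "\<lambda>i. c * e i"]) auto
    qed
  qed
next
  show "?C \<subseteq> ?H"
  proof
    fix x assume "x \<in> ?C"
    then obtain e where e: "x = (\<Sum>i\<in>I. e i *\<^sub>R v i)" "\<forall>i\<in>I-J. e i \<ge> 0" by blast
    have trm: "e i *\<^sub>R v i \<in> ?H" if "i \<in> I" for i
    proof (cases "e i \<ge> 0")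
      case True
      have "v i \<in> ?H" using that by (intro hull_inc) auto
      then show ?thesis using True by (rule convex_cone_hull_mul)
    next
      case False
      then have "i \<in> J" using e that by auto
      then have "- v i \<in> ?H" by (intro hull_inc) auto
      then have "(- e i) *\<^sub>R (- v i) \<in> ?H" using False by (intro convex_cone_hull_mul) auto
      then show ?thesis by simp
    qed
    have "(\<Sum>i\<in>K. e i *\<^sub>R v i) \<in> ?H" if "K \<subseteq> I" for K
      using finite_subset[OF that fin] that
    proof (induction K rule: finite_induct)
      case empty then show ?case by (simp add: convex_cone_hull_contains_0)
    next
      case (insert k K)
      then show ?case by (simp add: convex_cone_hull_add trm)
    qed
    then show "x \<in> ?H" using e by simp
  qed
qed

lemma farkas:
  fixes a :: "nat \<Rightarrow> real^'n" and b :: "nat \<Rightarrow> real"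
  assumes JI: "J \<subseteq> {1..m}"
    and nofeas: "\<not> (\<exists>x. (\<forall>i\<in>J. a i \<bullet> x = b i) \<and> (\<forall>j\<in>{1..m}. a j \<bullet> x \<le> b j))"
  shows "\<exists>e. (\<forall>i\<in>{1..m}-J. e i \<ge> 0) \<and> (\<Sum>i\<in>{1..m}. e i *\<^sub>R a i) = 0
             \<and> (\<Sum>i\<in>{1..m}. e i * b i) = -1"
proof -
  define v where "v i = (a i, b i)" for i
  define C where "C = {(\<Sum>i\<in>{1..m}. e i *\<^sub>R v i) | e. \<forall>i\<in>{1..m}-J. e i \<ge> 0}"
  have CH: "C = convex_cone hull (v ` {1..m} \<union> (\<lambda>i. - v i) ` J)"
    unfolding C_def by (rule cone_eq) (use JI in auto)
  have clC: "closed C" unfolding CH by (rule closed_convex_cone_hull) (use JI finite_subset in auto)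
  have cvC: "convex C" unfolding CH by (rule convex_convex_cone_hull)
  have cnC: "c *\<^sub>R w \<in> C" if "w \<in> C" "c \<ge> 0" for w c
    using that unfolding CH by (rule convex_cone_hull_mul)
  have zC: "0 \<in> C" unfolding CH by (rule convex_cone_hull_contains_0)
  have vC: "v j \<in> C" if "j \<in> {1..m}" for j
    unfolding CH using that by (intro hull_inc) auto
  have nvC: "- v j \<in> C" if "j \<in> J" for j
    unfolding CH using that by (intro hull_inc) auto
  have "(0, -1) \<in> C"
  proof (rule ccontr)
    assume "(0, -1) \<notin> C"
    then obtain z \<beta> where z1: "z \<bullet> (0, -1) < \<beta>" and z2: "\<forall>w\<in>C. \<beta> < z \<bullet> w"
      using separating_hyperplane_closed_point[OF cvC clC] by blast
    have b0: "\<beta> < 0" using z2 zC by auto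
    have pos: "z \<bullet> w \<ge> 0" if "w \<in> C" for w
    proof (rule ccontr)
      assume "\<not> z \<bullet> w \<ge> 0"
      then have neg: "z \<bullet> w < 0" by simp
      have "(\<beta> / (z \<bullet> w)) *\<^sub>R w \<in> C" using that b0 neg
        by (intro cnC) (auto simp: zero_le_divide_iff)
      then have "\<beta> < z \<bullet> ((\<beta> / (z \<bullet> w)) *\<^sub>R w)" using z2 by blast
      also have "\<dots> = \<beta>" using neg by simp
      finally show False by simp
    qed
    obtain y s where zys: "z = (y, s)" by (cases z)
    have s0: "s > 0" using z1 b0 zys by (simp add: inner_Pair)
    define x where "x = (- 1 / s) *\<^sub>R y"
    have ineq: "a j \<bullet> x \<le> b j" if "j \<in> {1..m}" for j
    proof -
      have "y \<bullet> a j + s * b j \<ge> 0" using pos[OF vC[OF that]] zys by (simp add: v_def inner_Pair)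
      then show ?thesis using s0 unfolding x_def
        by (simp add: inner_commute field_simps)
    qed
    have eq: "a j \<bullet> x = b j" if "j \<in> J" for j
    proof -
      have "y \<bullet> a j + s * b j \<ge> 0" using pos[OF vC] that JI zys by (auto simp: v_def inner_Pair)
      moreover have "- (y \<bullet> a j + s * b j) \<ge> 0" using pos[OF nvC[OF that]] zys
        by (simp add: v_def inner_Pair)
      ultimately have "y \<bullet> a j + s * b j = 0" by simp
      then show ?thesis using s0 unfolding x_def
        by (simp add: inner_commute field_simps)
    qed
    show False using nofeas ineq eq by blast
  qed
  then obtain e where e: "(0, -1) = (\<Sum>i\<in>{1..m}. e i *\<^sub>R v i)" "\<forall>i\<in>{1..m}-J. e i \<ge> 0"
    unfolding C_def by blast
  have "fst (0::real^'n, -1::real) = fst (\<Sum>i\<in>{1..m}. e i *\<^sub>R v i)"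
       "snd (0::real^'n, -1::real) = snd (\<Sum>i\<in>{1..m}. e i *\<^sub>R v i)" using e(1) by simp_all
  then have "(\<Sum>i\<in>{1..m}. e i *\<^sub>R a i) = 0" "(\<Sum>i\<in>{1..m}. e i * b i) = -1"
    by (simp_all add: fst_sum snd_sum v_def)
  then show ?thesis using e(2) by blast
qed

lemma infeasible_pert:
  fixes a :: "nat \<Rightarrow> real^'n" and b :: "nat \<Rightarrow> real"
  assumes e0: "\<forall>i\<in>{1..m}-J. e i \<ge> 0" and ea: "(\<Sum>i\<in>{1..m}. e i *\<^sub>R a i) = 0"
    and eb: "(\<Sum>i\<in>{1..m}. e i * b i) = -1"
    and \<epsilon>: "0 < \<epsilon>" "\<epsilon> \<le> 1" "\<epsilon> * ((\<Sum>i\<in>{1..m}. \<bar>e i\<bar>) + 1) < 1"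
    and xJ: "\<forall>i\<in>J. a i \<bullet> x = bpert b \<epsilon> i" and xall: "\<forall>j\<in>{1..m}. a j \<bullet> x \<le> bpert b \<epsilon> j"
  shows False
proof -
  have "0 = (\<Sum>i\<in>{1..m}. e i *\<^sub>R a i) \<bullet> x" using ea by simp
  also have "\<dots> = (\<Sum>i\<in>{1..m}. e i * (a i \<bullet> x))" by (simp add: inner_sum_left)
  also have "\<dots> \<le> (\<Sum>i\<in>{1..m}. e i * bpert b \<epsilon> i)"
  proof (rule sum_mono)
    fix i assume i: "i \<in> {1..m}"
    show "e i * (a i \<bullet> x) \<le> e i * bpert b \<epsilon> i"
    proof (cases "i \<in> J")
      case True then show ?thesis using xJ by simp
    next
      case False then show ?thesis using e0 i xall by (intro mult_left_mono) auto
    qed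
  qed
  also have "\<dots> = -1 + (\<Sum>i\<in>{1..m}. e i * \<epsilon> ^ i)"
    using eb by (simp add: bpert_def distrib_left sum.distrib)
  also have "\<dots> \<le> -1 + (\<Sum>i\<in>{1..m}. \<bar>e i\<bar> * \<epsilon>)"
  proof -
    have "e i * \<epsilon> ^ i \<le> \<bar>e i\<bar> * \<epsilon>" if "i \<in> {1..m}" for i
    proof -
      have i1: "i \<ge> 1" using that by simp
      obtain k where k: "i = Suc k" using i1 by (cases i) auto
      have "\<epsilon> ^ i \<le> \<epsilon>" using k \<epsilon> power_Suc_le_self by (metis less_imp_le)
      then have "e i * \<epsilon> ^ i \<le> \<bar>e i\<bar> * \<epsilon> ^ i" using \<epsilon> by (intro mult_right_mono) auto
      also have "\<dots> \<le> \<bar>e i\<bar> * \<epsilon>" using \<open>\<epsilon> ^ i \<le> \<epsilon>\<close> by (intro mult_left_mono) auto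
      finally show ?thesis .
    qed
    then show ?thesis by (intro add_left_mono sum_mono) auto
  qed
  also have "\<dots> < 0"
  proof -
    have "(\<Sum>i\<in>{1..m}. \<bar>e i\<bar> * \<epsilon>) = \<epsilon> * (\<Sum>i\<in>{1..m}. \<bar>e i\<bar>)"
      by (simp add: sum_distrib_left mult.commute)
    also have "\<dots> < 1" using \<epsilon> by (simp add: algebra_simps)
    finally show ?thesis by simp
  qed
  finally show False by simp
qed

lemma facefam_iff:
  "J \<in> FaceFam m a b \<epsilon> \<longleftrightarrow> J \<subseteq> {1..m} \<and> J \<noteq> {} \<and>
     (\<exists>x. (\<forall>i\<in>J. a i \<bullet> x = bpert b \<epsilon> i) \<and> (\<forall>j\<in>{1..m}. a j \<bullet> x \<le> bpert b \<epsilon> j))"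
  unfolding FaceFam_def Face_def bdHsp_def Kpoly_def Hsp_def by blast

theorem lemma2:
  fixes m :: nat and a :: "nat \<Rightarrow> real^'n" and b :: "nat \<Rightarrow> real"
    and G :: "nat set set"
  assumes "m \<ge> 1"
    and "\<And>i. i \<in> {1..m} \<Longrightarrow> a i \<noteq> 0"
    and "Kpoly m a b 0 \<noteq> {}"
    and "eventually (\<lambda>\<epsilon>. FaceFam m a b \<epsilon> = G) (at_right 0)"
  shows "G \<subseteq> FaceFam m a b 0 \<and> card G \<le> card (FaceFam m a b 0)"
proof -
  obtain d :: real where d: "d > 0" "\<forall>y>0. y < d \<longrightarrow> FaceFam m a b y = G"
    using assms(4) by (auto simp: eventually_at_right_field)
  have sub: "G \<subseteq> FaceFam m a b 0"
  proof
    fix J assume J: "J \<in> G"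
    show "J \<in> FaceFam m a b 0"
    proof (rule ccontr)
      assume nJ: "J \<notin> FaceFam m a b 0"
      have JF: "J \<in> FaceFam m a b \<epsilon>" if "0 < \<epsilon>" "\<epsilon> < d" for \<epsilon>
      proof -
        have "FaceFam m a b \<epsilon> = G" using d(2) that by blast
        then show ?thesis using J by simp
      qed
      have "J \<in> FaceFam m a b (d/2)" using JF[of "d/2"] d(1) by simp
      then have JI: "J \<subseteq> {1..m}" "J \<noteq> {}" by (auto simp: facefam_iff)
      have "\<not> (\<exists>x. (\<forall>i\<in>J. a i \<bullet> x = b i) \<and> (\<forall>j\<in>{1..m}. a j \<bullet> x \<le> b j))"
      proof
        assume "\<exists>x. (\<forall>i\<in>J. a i \<bullet> x = b i) \<and> (\<forall>j\<in>{1..m}. a j \<bullet> x \<le> b j)"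
        then obtain x where x: "\<forall>i\<in>J. a i \<bullet> x = b i" "\<forall>j\<in>{1..m}. a j \<bullet> x \<le> b j" by blast
        have bp0: "bpert b 0 i = b i" if "i \<in> {1..m}" for i
          using that by (simp add: bpert_def power_0_left)
        have "J \<in> FaceFam m a b 0" unfolding facefam_iff
          using JI x bp0 by (intro conjI exI[of _ x]) auto
        then show False using nJ by simp
      qed
      from farkas[OF JI(1) this] obtain e where e: "\<forall>i\<in>{1..m}-J. e i \<ge> 0"
        "(\<Sum>i\<in>{1..m}. e i *\<^sub>R a i) = 0" "(\<Sum>i\<in>{1..m}. e i * b i) = -1" by blast
      define M where "M = (\<Sum>i\<in>{1..m}. \<bar>e i\<bar>) + 1"
      have M1: "M \<ge> 1" unfolding M_def by (simp add: sum_nonneg)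
      define \<epsilon> where "\<epsilon> = min (d/2) (1 / (2 * M))"
      have "1 / (2 * M) \<le> 1" using M1 by simp
      then have ep: "0 < \<epsilon>" "\<epsilon> < d" "\<epsilon> \<le> 1" using d M1 unfolding \<epsilon>_def by (auto simp: min_le_iff_disj)
      have "\<epsilon> * M \<le> 1 / (2 * M) * M" using M1 by (intro mult_right_mono) (auto simp: \<epsilon>_def)
      also have "\<dots> < 1" using M1 by simp
      finally have epM: "\<epsilon> * M < 1" .
      from JF[OF ep(1,2)] obtain x where
        "\<forall>i\<in>J. a i \<bullet> x = bpert b \<epsilon> i" "\<forall>j\<in>{1..m}. a j \<bullet> x \<le> bpert b \<epsilon> j"
        by (auto simp: facefam_iff)
      then show False using infeasible_pert[OF e ep(1,3) epM[unfolded M_def]] by blast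
    qed
  qed
  have "finite (FaceFam m a b 0)"
    by (rule finite_subset[of _ "Pow {1..m}"]) (auto simp: FaceFam_def)
  then show ?thesis using sub card_mono by blast
qed

end
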